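(* Let $G=(V,E)$ be a finite simple strongly connected directed graph and let $W\subsetneq V$ be a nonempty proper strongly connected subset. Then $\det(L_W)$ is an irreducible polynomial in the variables $(x_e)_{e\in E}$, $(y_v)_{v\in W}$ (over $\mathbb C$).
   Context: $x_e$ ($e\in E$) and $y_v$ ($v\in V$) are independent indeterminates. $Q$ is the $V\times V$ matrix with $Q_{vw}=x_e$ if $v\ne w$ and $e$ is an edge from $v$ to $w$ ($0$ if none), and $Q_{vv}=-\sum_{e:s(e)=v}x_e$. $L=Q+Y$ with $Y$ diagonal, $Y_{vv}=y_v$. $L_W$ is the principal submatrix of $L$ with rows and columns indexed by $W$. A subset $W$ is strongly connected if the induced subgraph $G_W$ is strongly connected. *)

theory Defs
  imports Complex_Main "HOL-Library.Poly_Mapping" "HOL-Combinatorics.Permutations"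
    "HOL-Computational_Algebra.Factorial_Ring"
begin

text \<open>Multivariate polynomials over the complex numbers in indeterminates of type 'x,
  represented as finitely supported maps from monomials (exponent vectors) to coefficients.\<close>
type_synonym 'x mpoly = "('x \<Rightarrow>\<^sub>0 nat) \<Rightarrow>\<^sub>0 complex"

definition var :: "'x \<Rightarrow> 'x mpoly" where
  "var x = Poly_Mapping.single (Poly_Mapping.single x 1) 1"

text \<open>Indeterminates: Inl e = x_e for an edge e = (v,w); Inr v = y_v for a vertex v.\<close>
type_synonym 'v indet = "('v \<times> 'v) + 'v"

definition simple_digraph :: "'v set \<Rightarrow> ('v \<times> 'v) set \<Rightarrow> bool" where
  "simple_digraph V E \<longleftrightarrow> finite V \<and> E \<subseteq> V \<times> V \<and> (\<forall>v. (v, v) \<notin> E)"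

definition strongly_connected :: "('v \<times> 'v) set \<Rightarrow> 'v set \<Rightarrow> bool" where
  "strongly_connected E W \<longleftrightarrow> (\<forall>u\<in>W. \<forall>w\<in>W. (u, w) \<in> (E \<inter> (W \<times> W))\<^sup>*)"

definition Qmat :: "('v \<times> 'v) set \<Rightarrow> 'v \<Rightarrow> 'v \<Rightarrow> 'v indet mpoly" where
  "Qmat E v w = (if v \<noteq> w then (if (v, w) \<in> E then var (Inl (v, w)) else 0)
                 else - (\<Sum>e\<in>{e\<in>E. fst e = v}. var (Inl e)))"

definition Lmat :: "('v \<times> 'v) set \<Rightarrow> 'v \<Rightarrow> 'v \<Rightarrow> 'v indet mpoly" where
  "Lmat E v w = Qmat E v w + (if v = w then var (Inr v) else 0)"

definition det_on :: "'v set \<Rightarrow> ('v \<Rightarrow> 'v \<Rightarrow> 'a::comm_ring_1) \<Rightarrow> 'a" where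
  "det_on W M = (\<Sum>p | p permutes W. of_int (sign p) * (\<Prod>v\<in>W. M v (p v)))"

end

theory Submission
  imports Defs "HOL-Combinatorics.Cycles"
begin


abbreviation lk where "lk \<equiv> poly_mapping.lookup"
abbreviation ks where "ks \<equiv> Poly_Mapping.keys"

lemma lookup_mult_keys:
  fixes f g :: "'x mpoly"
  shows "lk (f * g) k = (\<Sum>a\<in>ks f. \<Sum>b\<in>ks g. (lk f a * lk g b when k = a + b))"
proof -
  have "lk (f * g) k = (\<Sum>l. lk f l * (\<Sum>q. lk g q when k = l + q))" by (rule lookup_mult)
  also have "\<dots> = (\<Sum>l\<in>ks f. lk f l * (\<Sum>q. lk g q when k = l + q))"
    by (rule Sum_any.expand_superset) (auto simp: in_keys_iff)
  also have "\<dots> = (\<Sum>l\<in>ks f. lk f l * (\<Sum>q\<in>ks g. lk g q when k = l + q))"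
    apply (rule sum.cong[OF refl])
    apply (subst Sum_any.expand_superset[of "ks g"])
    by (auto simp: in_keys_iff when_def)
  also have "\<dots> = (\<Sum>a\<in>ks f. \<Sum>b\<in>ks g. (lk f a * lk g b when k = a + b))"
    by (simp add: sum_distrib_left mult_when)
  finally show ?thesis .
qed

lemma lookup_mult_unique:
  fixes g h :: "'x mpoly"
  assumes "\<And>a b. a \<in> ks g \<Longrightarrow> b \<in> ks h \<Longrightarrow> a0 + b0 = a + b \<Longrightarrow> a = a0 \<and> b = b0"
  shows "lk (g * h) (a0 + b0) = lk g a0 * lk h b0"
proof -
  let ?c = "lk g a0 * lk h b0"
  have "lk (g*h) (a0+b0) = (\<Sum>a\<in>ks g. \<Sum>b\<in>ks h. (if a0 = a then (if b0 = b then ?c else 0) else 0))"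
    unfolding lookup_mult_keys using assms by (intro sum.cong refl) (auto simp: when_def)
  also have "\<dots> = (\<Sum>a\<in>ks g. (if a0 = a then (if b0 \<in> ks h then ?c else 0) else 0))"
    by (intro sum.cong refl) (simp add: sum.delta)
  also have "\<dots> = (if a0 \<in> ks g then (if b0 \<in> ks h then ?c else 0) else 0)"
    by (simp add: sum.delta)
  also have "\<dots> = ?c" by (auto simp: in_keys_iff)
  finally show ?thesis .
qed

definition vars :: "'x mpoly \<Rightarrow> 'x set" where "vars p = \<Union>(ks ` ks p)"

lemma lookup_mult_disjoint:
  fixes g h :: "'x mpoly"
  assumes "vars g \<subseteq> X" "vars h \<subseteq> Y" "X \<inter> Y = {}" "ks a \<subseteq> X" "ks b \<subseteq> Y"
  shows "lk (g * h) (a + b) = lk g a * lk h b"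
proof (rule lookup_mult_unique)
  fix a' b' assume that: "a' \<in> ks g" "b' \<in> ks h" "a + b = a' + b'"
  have ka': "ks a' \<subseteq> X" and kb': "ks b' \<subseteq> Y" using that assms unfolding vars_def by auto
  have *: "lk a' x = lk a x \<and> lk b' x = lk b x" for x
  proof -
    have e: "lk a x + lk b x = lk a' x + lk b' x" using that(3) by (metis lookup_add)
    show ?thesis
    proof (cases "x \<in> X")
      case True
      then have "x \<notin> Y" using assms(3) by auto
      then have "lk b x = 0" "lk b' x = 0" using assms(5) kb' by (auto simp: in_keys_iff)
      with e show ?thesis by simp
    next
      case False
      then have "lk a x = 0" "lk a' x = 0" using assms(4) ka' by (auto simp: in_keys_iff)
      with e show ?thesis by simp
    qed
  qed
  show "a' = a \<and> b' = b" using * by (auto intro!: poly_mapping_eqI)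
qed

definition wt :: "('x \<Rightarrow> nat) \<Rightarrow> ('x \<Rightarrow>\<^sub>0 nat) \<Rightarrow> nat" where
  "wt c m = (\<Sum>x\<in>ks m. lk m x * c x)"

lemma wt_add: "wt c (a + b) = wt c a + wt c b"
  unfolding wt_def by (rule setsum_keys_plus_distrib) (auto simp: algebra_simps)

lemma wt_superset: "finite S \<Longrightarrow> ks m \<subseteq> S \<Longrightarrow> wt c m = (\<Sum>x\<in>S. lk m x * c x)"
  unfolding wt_def by (rule sum.mono_neutral_left) (auto simp: in_keys_iff)

lemma digits_bound: "(\<And>i. i < n \<Longrightarrow> d i < B) \<Longrightarrow> (\<Sum>i<n. d i * B^i) < (B::nat)^n"
proof (induction n)
  case 0 show ?case by simp
next
  case (Suc n)
  have "(\<Sum>i<Suc n. d i * B^i) = (\<Sum>i<n. d i * B^i) + d n * B^n" by simp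
  also have "\<dots> < B^n + d n * B^n" using Suc by simp
  also have "\<dots> = (d n + 1) * B^n" by simp
  also have "\<dots> \<le> B * B^n" using Suc.prems[of n] by (intro mult_right_mono) auto
  finally show ?case by simp
qed

lemma div_digit: "x < (P::nat) \<Longrightarrow> (x + d * P) div P = d"
  by simp

lemma digits_unique:
  "(\<And>i. i < n \<Longrightarrow> d i < B) \<Longrightarrow> (\<And>i. i < n \<Longrightarrow> e i < B) \<Longrightarrow>
   (\<Sum>i<n. d i * B^i) = (\<Sum>i<n. e i * (B::nat)^i) \<Longrightarrow> i < n \<Longrightarrow> d i = e i"
proof (induction n arbitrary: i)
  case 0 thus ?case by simp
next
  case (Suc n)
  let ?x = "\<Sum>i<n. d i * B^i" and ?y = "\<Sum>i<n. e i * B^i"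
  have x: "?x < B^n" using Suc.prems(1) by (intro digits_bound) auto
  have y: "?y < B^n" using Suc.prems(2) by (intro digits_bound) auto
  have eq: "?x + d n * B^n = ?y + e n * B^n" using Suc.prems(3) by simp
  have dn: "d n = e n" using div_digit[OF x, of "d n"] div_digit[OF y, of "e n"] eq by simp
  with eq have xy: "?x = ?y" by simp
  show ?case
  proof (cases "i = n")
    case True then show ?thesis using dn by simp
  next
    case False
    then have "i < n" using Suc.prems(4) by simp
    then show ?thesis using Suc.IH[of i] Suc.prems(1,2) xy by simp
  qed
qed

lemma weight_exists:
  fixes M :: "('x \<Rightarrow>\<^sub>0 nat) set"
  assumes "finite M"
  shows "\<exists>c. inj_on (wt c) M \<and> (\<forall>a\<in>M. \<forall>b\<in>M. lk a z < lk b z \<longrightarrow> wt c a < wt c b)"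
proof -
  define S where "S = (\<Union>(ks ` M)) - {z}"
  have finS: "finite S" using assms by (auto simp: S_def)
  define n where "n = card S"
  obtain h where h: "bij_betw h {0..<n} S" using ex_bij_betw_nat_finite[OF finS] n_def by blast
  define B where "B = Suc (\<Sum>a\<in>M. \<Sum>x\<in>ks a. lk a x)"
  have Bb: "lk a x < B" if "a \<in> M" for a x
  proof (cases "x \<in> ks a")
    case True
    have "lk a x \<le> (\<Sum>x\<in>ks a. lk a x)" using True by (intro member_le_sum) auto
    also have "\<dots> \<le> (\<Sum>a\<in>M. \<Sum>x\<in>ks a. lk a x)" using that assms by (intro member_le_sum) auto
    finally show ?thesis unfolding B_def by simp
  next
    case False then show ?thesis by (simp add: B_def in_keys_iff)
  qed
  define c where "c x = (if x = z then B^n else if x \<in> S then B^(inv_into {0..<n} h x) else 0)" for x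
  define low where "low a = (\<Sum>i<n. lk a (h i) * B^i)" for a
  have wtf: "wt c a = lk a z * B^n + low a" if "a \<in> M" for a
  proof -
    have "ks a \<subseteq> insert z S" using that by (auto simp: S_def)
    then have "wt c a = (\<Sum>x\<in>insert z S. lk a x * c x)" using finS by (intro wt_superset) auto
    also have "\<dots> = lk a z * B^n + (\<Sum>x\<in>S. lk a x * c x)"
      using finS by (subst sum.insert) (auto simp: S_def c_def)
    also have "(\<Sum>x\<in>S. lk a x * c x) = (\<Sum>i\<in>{0..<n}. lk a (h i) * c (h i))"
      using sum.reindex_bij_betw[OF h, of "\<lambda>x. lk a x * c x"] by simp
    also have "\<dots> = low a" unfolding low_def
    proof (rule sum.cong)
      fix i assume i: "i \<in> {..<n}"
      have "h i \<in> S" using h i by (auto simp: bij_betw_def)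
      moreover have "inv_into {0..<n} h (h i) = i" using h i by (auto simp: bij_betw_def)
      ultimately show "lk a (h i) * c (h i) = lk a (h i) * B ^ i" by (auto simp: c_def S_def)
    qed auto
    finally show ?thesis .
  qed
  have lowb: "low a < B^n" if "a \<in> M" for a
    unfolding low_def using Bb[OF that] by (intro digits_bound) auto
  have mono: "wt c a < wt c b" if "a \<in> M" "b \<in> M" "lk a z < lk b z" for a b
  proof -
    have "wt c a < lk a z * B^n + B^n" using wtf lowb that by simp
    also have "\<dots> = (lk a z + 1) * B^n" by simp
    also have "\<dots> \<le> lk b z * B^n" using that by (intro mult_right_mono) auto
    also have "\<dots> \<le> wt c b" using wtf that by simp
    finally show ?thesis .
  qed
  have inj: "inj_on (wt c) M"
  proof (rule inj_onI)
    fix a b assume ab: "a \<in> M" "b \<in> M" "wt c a = wt c b"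
    have e: "low a + lk a z * B^n = low b + lk b z * B^n" using ab wtf by simp
    have zz: "lk a z = lk b z" using div_digit[OF lowb[OF ab(1)], of "lk a z"] div_digit[OF lowb[OF ab(2)], of "lk b z"] e by simp
    with e have "low a = low b" by simp
    then have dig: "lk a (h i) = lk b (h i)" if "i < n" for i
      using digits_unique[of n "\<lambda>i. lk a (h i)" B "\<lambda>i. lk b (h i)" i] Bb ab that unfolding low_def by blast
    show "a = b"
    proof (rule poly_mapping_eqI)
      fix x
      show "lk a x = lk b x"
      proof (cases "x = z")
        case True then show ?thesis using zz by simp
      next
        case False
        show ?thesis
        proof (cases "x \<in> S")
          case True
          then obtain i where "i \<in> {0..<n}" "x = h i" using h by (auto simp: bij_betw_def)
          then show ?thesis using dig by auto
        next
          case xS: False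
          then have "x \<notin> ks a" "x \<notin> ks b" using ab False by (auto simp: S_def)
          then show ?thesis by (simp add: in_keys_iff)
        qed
      qed
    qed
  qed
  show ?thesis using inj mono by blast
qed

lemma vars_disjoint:
  fixes g h :: "'x mpoly"
  assumes "g \<noteq> 0" "h \<noteq> 0" "\<And>m x. m \<in> ks (g*h) \<Longrightarrow> lk m x \<le> 1"
  shows "vars g \<inter> vars h = {}"
proof (rule ccontr)
  assume "vars g \<inter> vars h \<noteq> {}"
  then obtain z where zg: "z \<in> vars g" and zh: "z \<in> vars h" by blast
  obtain c where inj: "inj_on (wt c) (ks g \<union> ks h)"
    and mono: "\<forall>a\<in>ks g \<union> ks h. \<forall>b\<in>ks g \<union> ks h. lk a z < lk b z \<longrightarrow> wt c a < wt c b"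
    using weight_exists[of "ks g \<union> ks h" z] by auto
  have neg: "ks g \<noteq> {}" "ks h \<noteq> {}" using assms by auto
  obtain a0 where a0: "a0 \<in> ks g" "\<And>a. a \<in> ks g \<Longrightarrow> wt c a \<le> wt c a0"
  proof -
    have "Max (wt c ` ks g) \<in> wt c ` ks g" using neg by (intro Max_in) auto
    then obtain a0 where "a0 \<in> ks g" "wt c a0 = Max (wt c ` ks g)" by auto
    then show ?thesis using that by (metis Max_ge finite_imageI finite_keys image_eqI)
  qed
  obtain b0 where b0: "b0 \<in> ks h" "\<And>b. b \<in> ks h \<Longrightarrow> wt c b \<le> wt c b0"
  proof -
    have "Max (wt c ` ks h) \<in> wt c ` ks h" using neg by (intro Max_in) auto
    then obtain b0 where "b0 \<in> ks h" "wt c b0 = Max (wt c ` ks h)" by auto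
    then show ?thesis using that by (metis Max_ge finite_imageI finite_keys image_eqI)
  qed
  have "lk (g*h) (a0+b0) = lk g a0 * lk h b0"
  proof (rule lookup_mult_unique)
    fix a b assume ab: "a \<in> ks g" "b \<in> ks h" "a0 + b0 = a + b"
    have "wt c a0 + wt c b0 = wt c a + wt c b" using ab(3) by (metis wt_add)
    with a0(2)[OF ab(1)] b0(2)[OF ab(2)] have "wt c a = wt c a0" "wt c b = wt c b0" by auto
    then show "a = a0 \<and> b = b0" using inj a0(1) b0(1) ab(1,2) by (auto dest: inj_onD)
  qed
  then have "a0 + b0 \<in> ks (g*h)" using a0(1) b0(1) by (simp add: in_keys_iff)
  moreover have "lk a0 z \<ge> 1"
  proof -
    obtain a where "a \<in> ks g" "z \<in> ks a" using zg by (auto simp: vars_def)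
    then have "lk a z \<ge> 1" by (simp add: in_keys_iff)
    moreover have "\<not> lk a0 z < lk a z" using mono a0 \<open>a \<in> ks g\<close> by (meson UnI1 leD)
    ultimately show ?thesis by simp
  qed
  moreover have "lk b0 z \<ge> 1"
  proof -
    obtain b where "b \<in> ks h" "z \<in> ks b" using zh by (auto simp: vars_def)
    then have "lk b z \<ge> 1" by (simp add: in_keys_iff)
    moreover have "\<not> lk b0 z < lk b z" using mono b0 \<open>b \<in> ks h\<close> by (meson UnI2 leD)
    ultimately show ?thesis by simp
  qed
  ultimately show False using assms(3)[of "a0+b0" z] by (simp add: lookup_add)
qed



definition tdeg :: "('x \<Rightarrow>\<^sub>0 nat) \<Rightarrow> nat" where "tdeg m = wt (\<lambda>_. 1) m"

lemma tdeg_add: "tdeg (a + b) = tdeg a + tdeg b"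
  unfolding tdeg_def by (rule wt_add)

lemma tdeg_zero_iff: "tdeg m = 0 \<longleftrightarrow> m = 0"
proof
  assume "tdeg m = 0"
  then have "\<forall>x\<in>ks m. lk m x = 0" unfolding tdeg_def wt_def by simp
  then show "m = 0" by (auto intro!: poly_mapping_eqI simp: in_keys_iff)
qed (simp add: tdeg_def wt_def)

definition hom :: "nat \<Rightarrow> 'x mpoly \<Rightarrow> bool" where
  "hom d p \<longleftrightarrow> (\<forall>m\<in>ks p. tdeg m = d)"

lemma hom_add: "hom d p \<Longrightarrow> hom d q \<Longrightarrow> hom d (p + q)"
  unfolding hom_def using keys_add[of p q] by blast

lemma hom_uminus: "hom d p \<Longrightarrow> hom d (- p)"
  unfolding hom_def by simp

lemma hom_zero: "hom d 0"
  unfolding hom_def by simp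

lemma hom_sum: "(\<And>i. i \<in> I \<Longrightarrow> hom d (f i)) \<Longrightarrow> hom d (sum f I)"
  unfolding hom_def using keys_sum[of f I] by blast

lemma hom_mult: "hom d p \<Longrightarrow> hom e q \<Longrightarrow> hom (d + e) (p * q)"
  unfolding hom_def using keys_mult[of p q] by (force simp: tdeg_add)

lemma hom_const: "ks p \<subseteq> {0} \<Longrightarrow> hom 0 p"
  unfolding hom_def by (auto simp: tdeg_def wt_def)

lemma keys_of_int: "ks (of_int k :: 'x mpoly) \<subseteq> {0}"
  by (auto simp: in_keys_iff lookup_of_int when_def split: if_splits)

lemma hom_prod: "finite W \<Longrightarrow> (\<And>v. v \<in> W \<Longrightarrow> hom 1 (f v)) \<Longrightarrow> hom (card W) (\<Prod>v\<in>W. f v)"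
proof (induction W rule: finite_induct)
  case empty
  then show ?case by (simp add: hom_const)
next
  case (insert v F)
  then show ?case using hom_mult[of 1 "f v" "card F" "prod f F"] by simp
qed

lemma keys_var: "ks (var x) = {Poly_Mapping.single x 1}"
  by (simp add: var_def)

lemma hom_var: "hom 1 (var x)"
  unfolding hom_def keys_var by (simp add: tdeg_def wt_def)

definition ma :: "'x set \<Rightarrow> 'x mpoly \<Rightarrow> bool" where
  "ma S p \<longleftrightarrow> (\<forall>m\<in>ks p. \<forall>x. lk m x \<le> 1 \<and> (x \<in> ks m \<longrightarrow> x \<in> S))"

lemma ma_add: "ma S p \<Longrightarrow> ma S q \<Longrightarrow> ma S (p + q)"
  unfolding ma_def using keys_add[of p q] by blast

lemma ma_uminus: "ma S p \<Longrightarrow> ma S (- p)"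
  unfolding ma_def by simp

lemma ma_zero: "ma S 0"
  unfolding ma_def by simp

lemma ma_sum: "(\<And>i. i \<in> I \<Longrightarrow> ma S (f i)) \<Longrightarrow> ma S (sum f I)"
  unfolding ma_def using keys_sum[of f I] by blast

lemma ma_mono: "ma S p \<Longrightarrow> S \<subseteq> T \<Longrightarrow> ma T p"
  unfolding ma_def by blast

lemma ma_const: "ks p \<subseteq> {0} \<Longrightarrow> ma S p"
  unfolding ma_def by auto

lemma ma_mult: "ma S p \<Longrightarrow> ma T q \<Longrightarrow> S \<inter> T = {} \<Longrightarrow> ma (S \<union> T) (p * q)"
proof -
  assume a: "ma S p" "ma T q" "S \<inter> T = {}"
  show ?thesis unfolding ma_def
  proof (intro ballI allI)
    fix m x assume "m \<in> ks (p * q)"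
    then obtain a b where ab: "m = a + b" "a \<in> ks p" "b \<in> ks q" using keys_mult[of p q] by blast
    have 1: "lk a x \<le> 1" "x \<in> ks a \<longrightarrow> x \<in> S" using a(1) ab unfolding ma_def by auto
    have 2: "lk b x \<le> 1" "x \<in> ks b \<longrightarrow> x \<in> T" using a(2) ab unfolding ma_def by auto
    have "lk a x = 0 \<or> lk b x = 0" using 1 2 a(3) by (auto simp: in_keys_iff)
    then show "lk m x \<le> 1 \<and> (x \<in> ks m \<longrightarrow> x \<in> S \<union> T)"
      using 1 2 ab(1) by (auto simp: lookup_add in_keys_iff)
  qed
qed

lemma ma_prod:
  "finite W \<Longrightarrow> (\<And>v. v \<in> W \<Longrightarrow> ma (S v) (f v)) \<Longrightarrow> disjoint_family_on S W \<Longrightarrow>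
   ma (\<Union>(S ` W)) (\<Prod>v\<in>W. f v)"
proof (induction W rule: finite_induct)
  case empty
  then show ?case by (simp add: ma_const)
next
  case (insert v F)
  have d: "S v \<inter> \<Union>(S ` F) = {}" using insert.prems(2) insert.hyps(2)
    unfolding disjoint_family_on_def by auto
  have "disjoint_family_on S F" using insert.prems(2) unfolding disjoint_family_on_def by auto
  then have "ma (\<Union>(S ` F)) (prod f F)" using insert by auto
  then show ?case using ma_mult[OF _ _ d, of "f v" "prod f F"] insert by simp
qed

lemma ma_var: "ma {x} (var x)"
  unfolding ma_def keys_var by (auto simp: lookup_single when_def)

lemma ma_vars: "ma S p \<Longrightarrow> vars p \<subseteq> S"
  unfolding ma_def vars_def by auto

lemma vars_mult: "vars (p * q) \<subseteq> vars p \<union> vars q"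
  unfolding vars_def using keys_mult[of p q] keys_add by fastforce

lemma vars_one: "vars (1 :: 'x mpoly) = {}"
  unfolding vars_def by simp

definition mon :: "'x set \<Rightarrow> ('x \<Rightarrow>\<^sub>0 nat)" where
  "mon Z = (\<Sum>x\<in>Z. Poly_Mapping.single x 1)"

lemma lookup_mon: "finite Z \<Longrightarrow> lk (mon Z) x = (if x \<in> Z then 1 else 0)"
  by (simp add: mon_def lookup_sum lookup_single when_def)

lemma keys_mon: "finite Z \<Longrightarrow> ks (mon Z) = Z"
  by (auto simp: in_keys_iff lookup_mon split: if_splits)

lemma tdeg_mon: "finite Z \<Longrightarrow> tdeg (mon Z) = card Z"
  by (simp add: tdeg_def wt_def keys_mon lookup_mon)

lemma mon_union: "finite X \<Longrightarrow> finite Y \<Longrightarrow> X \<inter> Y = {} \<Longrightarrow> mon (X \<union> Y) = mon X + mon Y"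
  unfolding mon_def by (rule sum.union_disjoint)

lemma lookup_prod_disjoint:
  fixes f :: "'v \<Rightarrow> 'x mpoly"
  assumes "finite W" "disjoint_family_on S W" "\<And>v. v \<in> W \<Longrightarrow> vars (f v) \<subseteq> S v"
    "\<And>v. v \<in> W \<Longrightarrow> z v \<in> S v"
  shows "lk (\<Prod>v\<in>W. f v) (\<Sum>v\<in>W. Poly_Mapping.single (z v) 1) =
         (\<Prod>v\<in>W. lk (f v) (Poly_Mapping.single (z v) 1))"
  using assms
proof (induction W rule: finite_induct)
  case empty
  then show ?case by simp
next
  case (insert v F)
  have d: "S v \<inter> \<Union>(S ` F) = {}" using insert.prems(1) insert.hyps(2)
    unfolding disjoint_family_on_def by auto
  have df: "disjoint_family_on S F" using insert.prems(1) unfolding disjoint_family_on_def by auto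
  have vF: "vars (prod f F) \<subseteq> \<Union>(S ` F)" using insert.hyps(1) insert.prems(2)
  proof (induction F rule: finite_induct)
    case empty then show ?case by (simp add: vars_one)
  next
    case (insert u G)
    then show ?case using vars_mult[of "f u" "prod f G"] by auto
  qed
  have kF: "ks (\<Sum>u\<in>F. Poly_Mapping.single (z u) (1::nat)) \<subseteq> \<Union>(S ` F)"
    using keys_sum[of "\<lambda>u. Poly_Mapping.single (z u) (1::nat)" F] insert.prems(3) by auto
  have "lk (prod f (insert v F)) (\<Sum>u\<in>insert v F. Poly_Mapping.single (z u) 1) =
        lk (f v * prod f F) (Poly_Mapping.single (z v) 1 + (\<Sum>u\<in>F. Poly_Mapping.single (z u) 1))"
    using insert.hyps by simp
  also have "\<dots> = lk (f v) (Poly_Mapping.single (z v) 1) * lk (prod f F) (\<Sum>u\<in>F. Poly_Mapping.single (z u) 1)"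
    using insert.prems by (intro lookup_mult_disjoint[OF _ vF d _ kF]) auto
  also have "lk (prod f F) (\<Sum>u\<in>F. Poly_Mapping.single (z u) 1) = (\<Prod>u\<in>F. lk (f u) (Poly_Mapping.single (z u) 1))"
    using insert df by auto
  finally show ?case using insert.hyps by simp
qed



lemma lookup_of_int_mult: "lk (of_int k * q :: 'x mpoly) m = of_int k * lk q m"
  by (simp add: lookup_mult lookup_of_int when_mult)

lemma single_one_eq: "Poly_Mapping.single x (1::nat) = Poly_Mapping.single z 1 \<longleftrightarrow> x = z"
  by (metis lookup_single_eq lookup_single_not_eq one_neq_zero)

lemma single_one_eq': "Poly_Mapping.single x (Suc 0) = Poly_Mapping.single z (Suc 0) \<longleftrightarrow> x = z"
  using single_one_eq by simp

lemma lookup_var_single' [simp]: "lk (var x) (Poly_Mapping.single z (Suc 0)) = (if x = z then 1 else 0)"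
  by (simp add: var_def lookup_single when_def single_one_eq')

lemma lookup_var_single: "lk (var x) (Poly_Mapping.single z 1) = (if x = z then 1 else 0)"
  using lookup_var_single' by simp

definition Sr :: "('v \<times> 'v) set \<Rightarrow> 'v \<Rightarrow> 'v indet set" where
  "Sr E v = insert (Inr v) (Inl ` {e\<in>E. fst e = v})"

lemma Sr_disjoint: "disjoint_family_on (Sr E) W"
  unfolding disjoint_family_on_def Sr_def by auto

lemma L_ma: "ma (Sr E v) (Lmat E v w)"
proof -
  have q: "ma (Sr E v) (Qmat E v w)"
  proof (cases "v = w")
    case True
    have "ma (Sr E v) (\<Sum>e\<in>{e\<in>E. fst e = v}. var (Inl e))"
      by (rule ma_sum, rule ma_mono[OF ma_var]) (auto simp: Sr_def)
    then show ?thesis using True by (simp add: Qmat_def ma_uminus)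
  next
    case False
    then show ?thesis by (auto simp: Qmat_def ma_zero Sr_def intro: ma_mono[OF ma_var])
  qed
  have y: "ma (Sr E v) (if v = w then var (Inr v) else 0)"
    by (auto simp: ma_zero Sr_def intro: ma_mono[OF ma_var])
  show ?thesis unfolding Lmat_def by (rule ma_add[OF q y])
qed

lemma L_hom: "hom 1 (Lmat E v w)"
proof -
  have q: "hom 1 (Qmat E v w)"
    unfolding Qmat_def by (auto intro!: hom_uminus hom_sum hom_var hom_zero simp del: One_nat_def)
  have y: "hom 1 (if v = w then var (Inr v) else 0)"
    by (auto intro!: hom_var hom_zero simp del: One_nat_def)
  show ?thesis unfolding Lmat_def by (rule hom_add[OF q y])
qed

lemma L_coeff_y: "lk (Lmat E v w) (Poly_Mapping.single (Inr v) 1) = (if w = v then 1 else 0)"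
  by (simp add: Lmat_def Qmat_def lookup_add lookup_sum lookup_var_single)

lemma L_coeff_x:
  assumes "finite E" "(v, t) \<in> E" "v \<noteq> t"
  shows "lk (Lmat E v w) (Poly_Mapping.single (Inl (v, t)) 1) =
         (if w = v then -1 else if w = t then 1 else 0)"
proof -
  have fin: "finite {e\<in>E. fst e = v}" using assms by simp
  have "(\<Sum>e\<in>{e\<in>E. fst e = v}. lk (var (Inl e)) (Poly_Mapping.single (Inl (v, t)) 1)) =
        (\<Sum>e\<in>{e\<in>E. fst e = v}. if e = (v, t) then 1 else 0)"
    by (intro sum.cong refl) (simp add: lookup_var_single)
  also have "\<dots> = 1" using fin assms by (simp add: sum.delta')
  finally have s: "(\<Sum>e\<in>{e\<in>E. fst e = v}. lk (var (Inl e)) (Poly_Mapping.single (Inl (v, t)) 1)) = 1" .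
  show ?thesis using assms s
    by (auto simp: Lmat_def Qmat_def lookup_add lookup_sum lookup_var_single)
qed

lemma det_lookup:
  assumes "finite W" "\<And>v. v \<in> W \<Longrightarrow> z v \<in> Sr E v"
  shows "lk (det_on W (Lmat E)) (\<Sum>v\<in>W. Poly_Mapping.single (z v) 1) =
     (\<Sum>p\<in>{p. p permutes W}. of_int (sign p) * (\<Prod>v\<in>W. lk (Lmat E v (p v)) (Poly_Mapping.single (z v) 1)))"
  unfolding det_on_def lookup_sum lookup_of_int_mult
  by (intro sum.cong refl arg_cong2[where f="(*)"] lookup_prod_disjoint[OF assms(1) Sr_disjoint])
     (auto intro: assms(2) dest: ma_vars[OF L_ma, THEN subsetD])

lemma det_hom:
  assumes "finite W"
  shows "hom (card W) (det_on W (Lmat E))"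
proof -
  have "hom (0 + card W) (of_int (sign p) * (\<Prod>v\<in>W. Lmat E v (p v)))" for p
    by (intro hom_mult hom_const keys_of_int hom_prod assms L_hom)
  then show ?thesis unfolding det_on_def by (intro hom_sum) simp
qed

lemma det_ma:
  assumes "finite W"
  shows "ma UNIV (det_on W (Lmat E))"
proof -
  have "ma ({} \<union> \<Union>(Sr E ` W)) (of_int (sign p) * (\<Prod>v\<in>W. Lmat E v (p v)))" for p
    by (intro ma_mult ma_const keys_of_int ma_prod assms L_ma Sr_disjoint) auto
  then show ?thesis unfolding det_on_def by (intro ma_sum) (auto intro: ma_mono)
qed

lemma cyc_nth:
  assumes "distinct cs" "i < length cs"
  shows "(cycle_of_list cs ^^ n) (cs ! i) = cs ! ((n + i) mod length cs)"
proof -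
  have "map (cycle_of_list cs ^^ n) cs ! i = rotate n cs ! i" using cyclic_rotation[OF assms(1)] by simp
  then show ?thesis using assms(2) by (simp add: nth_rotate)
qed

lemma cyc_orbit:
  assumes "distinct cs" "c \<in> set cs" "c \<in> J" "\<And>x. x \<in> J \<Longrightarrow> cycle_of_list cs x \<in> J"
  shows "set cs \<subseteq> J"
proof
  fix y assume "y \<in> set cs"
  then obtain j where j: "j < length cs" "y = cs ! j" by (auto simp: in_set_conv_nth)
  obtain i where i: "i < length cs" "c = cs ! i" using assms(2) by (auto simp: in_set_conv_nth)
  have pw: "(cycle_of_list cs ^^ n) c \<in> J" for n
    by (induction n) (auto intro: assms(3,4))
  have "(j + length cs - i + i) mod length cs = j" using i j by simp
  then have "(cycle_of_list cs ^^ (j + length cs - i)) c = y" using cyc_nth[OF assms(1) i(1)] i j by simp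
  then show "y \<in> J" using pw by metis
qed

lemma cyc_nofix:
  assumes "distinct cs" "length cs \<ge> 2" "x \<in> set cs"
  shows "cycle_of_list cs x \<noteq> x"
proof -
  obtain i where i: "i < length cs" "x = cs ! i" using assms(3) by (auto simp: in_set_conv_nth)
  have "cycle_of_list cs x = cs ! ((1 + i) mod length cs)" using cyc_nth[OF assms(1) i(1), of 1] i by simp
  moreover have "(1 + i) mod length cs \<noteq> i"
  proof (cases "Suc i < length cs")
    case True then show ?thesis by simp
  next
    case False
    then have "Suc i = length cs" using i by simp
    then have "(1 + i) mod length cs = 0" by simp
    moreover have "i \<noteq> 0" using \<open>Suc i = length cs\<close> assms(2) by simp
    ultimately show ?thesis by simp
  qed
  moreover have lt: "Suc i mod length cs < length cs" using i(1) by (intro mod_less_divisor) auto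
  ultimately show ?thesis using i by (simp add: nth_eq_iff_index_eq[OF assms(1) lt i(1)])
qed

lemma cyc_in_set: "x \<in> set cs \<Longrightarrow> cycle_of_list cs x \<in> set cs"
  using cycle_permutes[of cs] by (simp add: permutes_in_image)

lemma sign_cycle: "distinct cs \<Longrightarrow> sign (cycle_of_list cs) = (-1) ^ (length cs - 1)"
proof (induction cs rule: cycle_of_list.induct)
  case (1 i j cs)
  have "sign (cycle_of_list (i # j # cs)) = sign (Transposition.transpose i j) * sign (cycle_of_list (j # cs))"
    by (metis cycle_of_list.simps(1) sign_compose permutation_swap_id permutation_of_cycle)
  also have "\<dots> = (-1) * (-1) ^ (length cs)" using 1 by (simp add: sign_swap_id)
  finally show ?case by (simp del: cycle_of_list.simps)
qed simp_all

lemma cyc_closure: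
  assumes cs: "distinct cs" "length cs \<ge> 2" and D: "D \<subseteq> set cs"
    and p: "p permutes W" and W: "set cs \<subseteq> W"
    and out: "\<And>v. v \<in> W \<Longrightarrow> v \<notin> D \<Longrightarrow> p v = v"
    and inn: "\<And>v. v \<in> D \<Longrightarrow> p v = v \<or> p v = cycle_of_list cs v"
  shows "p = id \<or> (D = set cs \<and> p = cycle_of_list cs)"
proof (cases "\<exists>v\<in>D. p v \<noteq> v")
  case False
  have "p v = v" for v
    using False out p by (cases "v \<in> W") (auto simp: permutes_def)
  then show ?thesis by auto
next
  case True
  then obtain c where c: "c \<in> D" "p c \<noteq> c" by blast
  define J where "J = {v\<in>D. p v \<noteq> v}"
  have cl: "cycle_of_list cs x \<in> J" if "x \<in> J" for x
  proof -
    have x: "x \<in> D" "p x \<noteq> x" using that by (auto simp: J_def)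
    then have px: "p x = cycle_of_list cs x" using inn by blast
    let ?u = "cycle_of_list cs x"
    have ux: "?u \<noteq> x" using cyc_nofix[OF cs] x D by auto
    have "p ?u \<noteq> ?u"
    proof
      assume "p ?u = ?u"
      then have "p ?u = p x" using px by simp
      then have "?u = x" using permutes_inj[OF p] by (auto dest: injD)
      then show False using ux by simp
    qed
    moreover have "?u \<in> W" using cyc_in_set[of x cs] x D W by auto
    ultimately have "?u \<in> D" using out by blast
    then show ?thesis using \<open>p ?u \<noteq> ?u\<close> by (simp add: J_def)
  qed
  have "set cs \<subseteq> J" using cyc_orbit[OF cs(1), of c J] c D cl by (auto simp: J_def)
  then have DC: "D = set cs" using D by (auto simp: J_def)
  have "p v = cycle_of_list cs v" for v
  proof (cases "v \<in> set cs")
    case True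
    then have "v \<in> J" using \<open>set cs \<subseteq> J\<close> by auto
    then show ?thesis using inn by (auto simp: J_def)
  next
    case False
    then have "cycle_of_list cs v = v" by (rule id_outside_supp)
    moreover have "p v = v" using False DC out p by (cases "v \<in> W") (auto simp: permutes_def)
    ultimately show ?thesis by simp
  qed
  then show ?thesis using DC by auto
qed



definition zD :: "('v \<Rightarrow> 'v) \<Rightarrow> 'v set \<Rightarrow> 'v \<Rightarrow> 'v indet" where
  "zD \<tau> D v = (if v \<in> D then Inl (v, \<tau> v) else Inr v)"

definition cv :: "('v \<Rightarrow> 'v) \<Rightarrow> 'v set \<Rightarrow> 'v \<Rightarrow> 'v \<Rightarrow> complex" where
  "cv \<tau> D v w = (if v \<in> D then (if w = v then -1 else if w = \<tau> v then 1 else 0)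
                 else (if w = v then 1 else 0))"

lemma zD_inj: "inj_on (zD \<tau> D) W"
proof (rule inj_onI)
  fix x y assume "zD \<tau> D x = zD \<tau> D y"
  then show "x = y" unfolding zD_def by (cases "x \<in> D"; cases "y \<in> D") simp_all
qed

lemma mon_zD: "finite W \<Longrightarrow> mon (zD \<tau> D ` W) = (\<Sum>v\<in>W. Poly_Mapping.single (zD \<tau> D v) 1)"
  unfolding mon_def by (simp add: sum.reindex[OF zD_inj])

lemma coeff_D:
  assumes E: "finite E" "\<And>v. (v, v) \<notin> E" and W: "finite W"
    and D: "\<And>d. d \<in> D \<Longrightarrow> (d, \<tau> d) \<in> E"
  shows "lk (det_on W (Lmat E)) (mon (zD \<tau> D ` W)) =
     (\<Sum>p\<in>{p. p permutes W}. of_int (sign p) * (\<Prod>v\<in>W. cv \<tau> D v (p v)))"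
proof -
  have z: "zD \<tau> D v \<in> Sr E v" for v using D by (auto simp: zD_def Sr_def)
  have c: "lk (Lmat E v w) (Poly_Mapping.single (zD \<tau> D v) 1) = cv \<tau> D v w" for v w
  proof (cases "v \<in> D")
    case True
    have e: "(v, \<tau> v) \<in> E" using D True by auto
    then have "v \<noteq> \<tau> v" using E(2)[of v] by auto
    note e this
    then show ?thesis using True L_coeff_x[OF E(1)] by (simp add: zD_def cv_def)
  next
    case False
    have "lk (Lmat E v w) (Poly_Mapping.single (Inr v) 1) = (if w = v then 1 else 0)" by (rule L_coeff_y)
    then show ?thesis using False unfolding zD_def cv_def by simp
  qed
  show ?thesis unfolding mon_zD[OF W] det_lookup[OF W z] c ..
qed

lemma sum_perm_only:
  assumes "finite W" "S \<subseteq> {p. p permutes W}"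
    "\<And>p. p permutes W \<Longrightarrow> (\<Prod>v\<in>W. g p v) \<noteq> (0::complex) \<Longrightarrow> p \<in> S"
  shows "(\<Sum>p\<in>{p. p permutes W}. of_int (sign p) * (\<Prod>v\<in>W. g p v)) =
         (\<Sum>p\<in>S. of_int (sign p) * (\<Prod>v\<in>W. g p v))"
proof (rule sum.mono_neutral_right)
  show "finite {p. p permutes W}" using finite_permutations[OF assms(1)] .
  show "S \<subseteq> {p. p permutes W}" by (rule assms(2))
  show "\<forall>p\<in>{p. p permutes W} - S. of_int (sign p) * (\<Prod>v\<in>W. g p v) = 0"
  proof
    fix p assume "p \<in> {p. p permutes W} - S"
    then have "(\<Prod>v\<in>W. g p v) = 0" using assms(3) by blast
    then show "of_int (sign p) * (\<Prod>v\<in>W. g p v) = 0" by simp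
  qed
qed

lemma prod_cv_ne0:
  assumes "finite W" "(\<Prod>v\<in>W. cv \<tau> D v (p v)) \<noteq> 0" "v \<in> W"
  shows "(v \<notin> D \<longrightarrow> p v = v) \<and> (v \<in> D \<longrightarrow> p v = v \<or> p v = \<tau> v)"
proof -
  have "cv \<tau> D v (p v) \<noteq> 0" using assms prod_zero_iff[OF assms(1), of "\<lambda>v. cv \<tau> D v (p v)"] by blast
  then show ?thesis unfolding cv_def by (cases "v \<in> D"; cases "p v = v"; cases "p v = \<tau> v") simp_all
qed

lemma prod_cv_id:
  assumes "finite W" "D \<subseteq> W"
  shows "(\<Prod>v\<in>W. cv \<tau> D v v) = (-1) ^ card D"
proof -
  have "(\<Prod>v\<in>W. cv \<tau> D v v) = (\<Prod>v\<in>W. if v \<in> D then -1 else 1)"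
    by (intro prod.cong refl) (simp add: cv_def)
  also have "\<dots> = (\<Prod>v\<in>W \<inter> D. -1)"
    using assms(1) by (simp add: prod.If_cases)
  also have "\<dots> = (-1) ^ card D" using assms by (simp add: Int_absorb1)
  finally show ?thesis .
qed

lemma coeff_m0:
  assumes E: "finite E" "\<And>v. (v, v) \<notin> E" and W: "finite W"
  shows "lk (det_on W (Lmat E)) (mon (zD \<tau> {} ` W)) = 1"
proof -
  have "lk (det_on W (Lmat E)) (mon (zD \<tau> {} ` W)) =
     (\<Sum>p\<in>{p. p permutes W}. of_int (sign p) * (\<Prod>v\<in>W. cv \<tau> {} v (p v)))"
    by (rule coeff_D[OF E W]) simp
  also have "\<dots> = (\<Sum>p\<in>{id}. of_int (sign p) * (\<Prod>v\<in>W. cv \<tau> {} v (p v)))"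
  proof (rule sum_perm_only[OF W])
    fix p assume p: "p permutes W" "(\<Prod>v\<in>W. cv \<tau> {} v (p v)) \<noteq> 0"
    have "p v = v" for v using prod_cv_ne0[OF W p(2)] p(1) by (cases "v \<in> W") (auto simp: permutes_def)
    then show "p \<in> {id}" by auto
  qed (auto simp: permutes_id)
  also have "\<dots> = 1" using prod_cv_id[OF W, of "{}"] by simp
  finally show ?thesis .
qed

lemma coeff_cycle:
  assumes E: "finite E" "\<And>v. (v, v) \<notin> E" and W: "finite W"
    and cs: "distinct cs" "length cs \<ge> 2" "set cs \<subseteq> W" "\<And>c. c \<in> set cs \<Longrightarrow> (c, cycle_of_list cs c) \<in> E"
    and D: "D \<subseteq> set cs"
  shows "lk (det_on W (Lmat E)) (mon (zD (cycle_of_list cs) D ` W)) =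
     (-1) ^ card D + (if D = set cs then (-1) ^ (length cs - 1) else 0)"
proof -
  let ?n = "cycle_of_list cs"
  let ?F = "\<lambda>p. of_int (sign p) * (\<Prod>v\<in>W. cv ?n D v (p v))"
  define S where "S = (if D = set cs then {id, ?n} else {id})"
  have nperm: "?n permutes W" using cycle_permutes[of cs] cs(3) by (rule permutes_subset)
  have "lk (det_on W (Lmat E)) (mon (zD ?n D ` W)) = (\<Sum>p\<in>{p. p permutes W}. ?F p)"
    by (rule coeff_D[OF E W]) (use D cs(4) in auto)
  also have "\<dots> = (\<Sum>p\<in>S. ?F p)"
  proof (rule sum_perm_only[OF W])
    show "S \<subseteq> {p. p permutes W}" using nperm by (auto simp: S_def permutes_id)
  next
    fix p assume p: "p permutes W" "(\<Prod>v\<in>W. cv ?n D v (p v)) \<noteq> 0"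
    have "p = id \<or> (D = set cs \<and> p = ?n)"
    proof (rule cyc_closure[OF cs(1,2) D p(1) cs(3)])
      show "\<And>v. v \<in> W \<Longrightarrow> v \<notin> D \<Longrightarrow> p v = v" using prod_cv_ne0[OF W p(2)] by blast
      show "\<And>v. v \<in> D \<Longrightarrow> p v = v \<or> p v = ?n v" using prod_cv_ne0[OF W p(2)] D cs(3) by blast
    qed
    then show "p \<in> S" by (auto simp: S_def)
  qed
  also have "\<dots> = (-1) ^ card D + (if D = set cs then (-1) ^ (length cs - 1) else 0)"
  proof (cases "D = set cs")
    case False
    then show ?thesis using prod_cv_id[OF W] D cs(3) by (simp add: S_def)
  next
    case True
    have ne: "?n \<noteq> id"
    proof
      assume "?n = id"
      moreover have "cs ! 0 \<in> set cs" using cs(2) by (intro nth_mem) auto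
      ultimately show False using cyc_nofix[OF cs(1,2)] by auto
    qed
    have pn: "(\<Prod>v\<in>W. cv ?n D v (?n v)) = 1"
    proof (intro prod.neutral ballI)
      fix v assume "v \<in> W"
      show "cv ?n D v (?n v) = 1"
      proof (cases "v \<in> set cs")
        case True
        then show ?thesis using cyc_nofix[OF cs(1,2) True] \<open>D = set cs\<close> by (simp add: cv_def)
      next
        case False
        then show ?thesis using id_outside_supp[OF False] \<open>D = set cs\<close> by (simp add: cv_def)
      qed
    qed
    have "(\<Sum>p\<in>S. ?F p) = ?F id + ?F ?n" using True ne by (simp add: S_def)
    also have "?F id = (-1) ^ card D" using prod_cv_id[OF W] D cs(3) by simp
    also have "?F ?n = (-1) ^ (length cs - 1)" using pn sign_cycle[OF cs(1)] by simp
    finally show ?thesis using True by simp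
  qed
  finally show ?thesis .
qed

lemma cycle_coeff_zero:
  assumes E: "finite E" "\<And>v. (v, v) \<notin> E" and W: "finite W"
    and cs: "distinct cs" "length cs \<ge> 2" "set cs \<subseteq> W" "\<And>c. c \<in> set cs \<Longrightarrow> (c, cycle_of_list cs c) \<in> E"
  shows "lk (det_on W (Lmat E)) (mon (zD (cycle_of_list cs) (set cs) ` W)) = 0"
proof -
  have k: "card (set cs) = length cs" using cs(1) by (simp add: distinct_card)
  obtain k0 where "length cs = Suc k0" using cs(2) by (cases "length cs") auto
  then show ?thesis using coeff_cycle[OF E W cs order_refl] k by simp
qed

lemma cycle_coeff_part:
  assumes E: "finite E" "\<And>v. (v, v) \<notin> E" and W: "finite W"
    and cs: "distinct cs" "length cs \<ge> 2" "set cs \<subseteq> W" "\<And>c. c \<in> set cs \<Longrightarrow> (c, cycle_of_list cs c) \<in> E"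
    and D: "D \<subseteq> set cs" "D \<noteq> set cs"
  shows "lk (det_on W (Lmat E)) (mon (zD (cycle_of_list cs) D ` W)) \<noteq> 0"
  using coeff_cycle[OF E W cs D(1)] D(2) by simp



lemma cross_edge:
  assumes "(x, y) \<in> r\<^sup>*" "x \<in> A" "y \<notin> A"
  shows "\<exists>u v. (u, v) \<in> r \<and> u \<in> A \<and> v \<notin> A"
  using assms by (induction rule: rtrancl_induct) auto

lemma distinct_path:
  assumes "(x, y) \<in> r\<^sup>*"
  shows "\<exists>xs. xs \<noteq> [] \<and> hd xs = x \<and> last xs = y \<and> distinct xs \<and>
             (\<forall>i. Suc i < length xs \<longrightarrow> (xs ! i, xs ! Suc i) \<in> r)"
  using assms
proof (induction rule: converse_rtrancl_induct)
  case base
  show ?case by (intro exI[of _ "[y]"]) simp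
next
  case (step x z)
  then obtain zs where zs: "zs \<noteq> []" "hd zs = z" "last zs = y" "distinct zs"
    "\<forall>i. Suc i < length zs \<longrightarrow> (zs ! i, zs ! Suc i) \<in> r" by blast
  show ?case
  proof (cases "x \<in> set zs")
    case True
    then obtain k where k: "k < length zs" "zs ! k = x" by (auto simp: in_set_conv_nth)
    show ?thesis
    proof (intro exI[of _ "drop k zs"] conjI allI impI)
      show "drop k zs \<noteq> []" using k by simp
      show "hd (drop k zs) = x" using k by (simp add: hd_drop_conv_nth)
      show "last (drop k zs) = y" using k zs by simp
      show "distinct (drop k zs)" using zs by simp
      fix i assume "Suc i < length (drop k zs)"
      then show "(drop k zs ! i, drop k zs ! Suc i) \<in> r" using zs(5)[rule_format, of "k + i"] k by simp
    qed
  next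
    case False
    show ?thesis
    proof (intro exI[of _ "x # zs"] conjI allI impI)
      show "last (x # zs) = y" using zs by simp
      show "distinct (x # zs)" using zs False by simp
      fix i assume i: "Suc i < length (x # zs)"
      show "((x # zs) ! i, (x # zs) ! Suc i) \<in> r"
      proof (cases i)
        case 0
        then show ?thesis using zs step.hyps(1) by (simp add: hd_conv_nth)
      next
        case (Suc j)
        then show ?thesis using zs(5) i by simp
      qed
    qed simp_all
  qed
qed

lemma cycle_exists:
  assumes ab: "(a, b) \<in> E" "a \<noteq> b" and ba: "(b, a) \<in> (E \<inter> W \<times> W)\<^sup>*" and bW: "b \<in> W"
  shows "\<exists>cs. distinct cs \<and> length cs \<ge> 2 \<and> set cs \<subseteq> W \<and>
           (\<forall>c\<in>set cs. (c, cycle_of_list cs c) \<in> E) \<and> a \<in> set cs \<and> b \<in> set cs"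
proof -
  obtain cs where cs: "cs \<noteq> []" "hd cs = b" "last cs = a" "distinct cs"
    "\<forall>i. Suc i < length cs \<longrightarrow> (cs ! i, cs ! Suc i) \<in> E \<inter> W \<times> W"
    using distinct_path[OF ba] by blast
  have len: "length cs \<ge> 2"
  proof (rule ccontr)
    assume "\<not> length cs \<ge> 2"
    moreover have "length cs \<noteq> 0" using cs(1) by simp
    ultimately have "length cs = 1" by linarith
    then obtain x where "cs = [x]" by (cases cs) auto
    then show False using cs ab by simp
  qed
  have cs0: "cs ! 0 = b" using cs by (simp add: hd_conv_nth)
  have csl: "cs ! (length cs - 1) = a" using cs by (simp add: last_conv_nth)
  have sub: "set cs \<subseteq> W"
  proof
    fix c assume "c \<in> set cs"
    then obtain i where i: "i < length cs" "c = cs ! i" by (auto simp: in_set_conv_nth)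
    show "c \<in> W"
    proof (cases i)
      case 0 then show ?thesis using i cs0 bW by simp
    next
      case (Suc j) then show ?thesis using cs(5)[rule_format, of j] i by auto
    qed
  qed
  have edges: "(c, cycle_of_list cs c) \<in> E" if c: "c \<in> set cs" for c
  proof -
    obtain i where i: "i < length cs" "c = cs ! i" using c by (auto simp: in_set_conv_nth)
    have nx: "cycle_of_list cs c = cs ! ((1 + i) mod length cs)" using cyc_nth[OF cs(4) i(1), of 1] i by simp
    show ?thesis
    proof (cases "Suc i < length cs")
      case True
      then show ?thesis using nx cs(5) i by simp
    next
      case False
      then have "Suc i = length cs" using i by simp
      then have "i = length cs - 1" "(1 + i) mod length cs = 0" by simp_all
      then show ?thesis using nx i cs0 csl ab by simp
    qed
  qed
  have "a \<in> set cs" using last_in_set[OF cs(1)] cs(3) by simp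
  moreover have "b \<in> set cs" using hd_in_set[OF cs(1)] cs(2) by simp
  ultimately show ?thesis using cs len sub edges by blast
qed



lemma pm_add_eq_0: "(a::'x \<Rightarrow>\<^sub>0 nat) + b = 0 \<Longrightarrow> a = 0 \<and> b = 0"
proof -
  assume h: "a + b = 0"
  have "lk a x = 0 \<and> lk b x = 0" for x
    using arg_cong[OF h, of "\<lambda>m. lk m x"] by (simp add: lookup_add)
  then show ?thesis by (auto intro!: poly_mapping_eqI)
qed

lemma const_unit:
  fixes g :: "'x mpoly"
  assumes "g \<noteq> 0" "ks g \<subseteq> {0}"
  shows "g dvd 1"
proof -
  define c where "c = lk g 0"
  have "ks g \<noteq> {}" using assms(1) by simp
  then have "0 \<in> ks g" using assms(2) by blast
  then have c0: "c \<noteq> 0" by (simp add: c_def in_keys_iff)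
  have g: "g = Poly_Mapping.single 0 c"
  proof (rule poly_mapping_eqI)
    fix k show "lk g k = lk (Poly_Mapping.single 0 c) k"
    proof (cases "k = 0")
      case True then show ?thesis by (simp add: c_def)
    next
      case False
      then have "k \<notin> ks g" using assms(2) by auto
      then show ?thesis using False by (simp add: in_keys_iff lookup_single)
    qed
  qed
  have "g * Poly_Mapping.single 0 (inverse c) = 1"
    unfolding g mult_single using c0 by simp
  then show ?thesis by (metis dvdI)
qed

lemma zD_split:
  assumes "A \<inter> B = {}" "A \<union> B = W" "C \<subseteq> W"
  shows "(zD \<tau> (C \<inter> A) ` W - Inr ` B) \<union> (zD \<tau> (C \<inter> B) ` W - Inr ` A) = zD \<tau> C ` W"
    and "(zD \<tau> (C \<inter> A) ` W - Inr ` B) \<inter> (zD \<tau> (C \<inter> B) ` W - Inr ` A) = {}"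
proof -
  show "(zD \<tau> (C \<inter> A) ` W - Inr ` B) \<union> (zD \<tau> (C \<inter> B) ` W - Inr ` A) = zD \<tau> C ` W"
  proof (intro equalityI subsetI)
    fix x assume "x \<in> (zD \<tau> (C \<inter> A) ` W - Inr ` B) \<union> (zD \<tau> (C \<inter> B) ` W - Inr ` A)"
    then show "x \<in> zD \<tau> C ` W"
    proof
      assume x: "x \<in> zD \<tau> (C \<inter> A) ` W - Inr ` B"
      then obtain w where w: "w \<in> W" "x = zD \<tau> (C \<inter> A) w" by auto
      show ?thesis
      proof (cases "w \<in> C \<inter> A")
        case True then show ?thesis using w by (auto simp: zD_def)
      next
        case False
        then have "x = Inr w" using w by (simp add: zD_def)
        then have "w \<notin> B" using x by auto
        then have "w \<notin> C" using False w assms by auto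
        then show ?thesis using w \<open>x = Inr w\<close> by (auto simp: zD_def image_iff)
      qed
    next
      assume x: "x \<in> zD \<tau> (C \<inter> B) ` W - Inr ` A"
      then obtain w where w: "w \<in> W" "x = zD \<tau> (C \<inter> B) w" by auto
      show ?thesis
      proof (cases "w \<in> C \<inter> B")
        case True then show ?thesis using w by (auto simp: zD_def)
      next
        case False
        then have "x = Inr w" using w by (simp add: zD_def)
        then have "w \<notin> A" using x by auto
        then have "w \<notin> C" using False w assms by auto
        then show ?thesis using w \<open>x = Inr w\<close> by (auto simp: zD_def image_iff)
      qed
    qed
  next
    fix x assume "x \<in> zD \<tau> C ` W"
    then obtain w where w: "w \<in> W" "x = zD \<tau> C w" by auto
    show "x \<in> (zD \<tau> (C \<inter> A) ` W - Inr ` B) \<union> (zD \<tau> (C \<inter> B) ` W - Inr ` A)"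
    proof (cases "w \<in> C")
      case True
      show ?thesis
      proof (cases "w \<in> A")
        case True
        then have "x = zD \<tau> (C \<inter> A) w" using w \<open>w \<in> C\<close> by (simp add: zD_def)
        then show ?thesis using w True \<open>w \<in> C\<close> by (auto simp: zD_def)
      next
        case False
        then have "w \<in> B" using w assms by auto
        then have "x = zD \<tau> (C \<inter> B) w" using w \<open>w \<in> C\<close> by (simp add: zD_def)
        then show ?thesis using w \<open>w \<in> B\<close> \<open>w \<in> C\<close> by (auto simp: zD_def)
      qed
    next
      case False
      then have x: "x = Inr w" using w by (simp add: zD_def)
      show ?thesis
      proof (cases "w \<in> A")
        case True
        then have "w \<notin> B" using assms by auto
        have "x = zD \<tau> (C \<inter> A) w" using x False by (simp add: zD_def)
        then show ?thesis using w x \<open>w \<notin> B\<close> by auto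
      next
        case wA: False
        have "x = zD \<tau> (C \<inter> B) w" using x False by (simp add: zD_def)
        then show ?thesis using w x wA by auto
      qed
    qed
  qed
  show "(zD \<tau> (C \<inter> A) ` W - Inr ` B) \<inter> (zD \<tau> (C \<inter> B) ` W - Inr ` A) = {}"
  proof (rule ccontr)
    assume "\<not> ?thesis"
    then obtain x where x1: "x \<in> zD \<tau> (C \<inter> A) ` W - Inr ` B" and x2: "x \<in> zD \<tau> (C \<inter> B) ` W - Inr ` A" by blast
    obtain w where w: "w \<in> W" "x = zD \<tau> (C \<inter> A) w" using x1 by auto
    obtain u where u: "u \<in> W" "x = zD \<tau> (C \<inter> B) u" using x2 by auto
    show False
    proof (cases "w \<in> C \<inter> A")
      case True
      then have "x = Inl (w, \<tau> w)" using w by (simp add: zD_def)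
      then have "u \<in> C \<inter> B" "u = w" using u by (auto simp: zD_def split: if_splits)
      then show False using True assms by auto
    next
      case False
      then have xw: "x = Inr w" using w by (simp add: zD_def)
      then have "w \<notin> B" using x1 by auto
      then have "w \<in> A" using w assms by auto
      then show False using x2 xw by auto
    qed
  qed
qed

theorem lemma4p1:
  fixes V :: "'v set" and E :: "('v \<times> 'v) set" and W :: "'v set"
  assumes "simple_digraph V E"
    and "strongly_connected E V"
    and "W \<noteq> {}" and "W \<subset> V"
    and "strongly_connected E W"
  shows "irreducible (det_on W (Lmat E))"
proof -
  have finV: "finite V" and EV: "E \<subseteq> V \<times> V" and loop: "\<And>v. (v, v) \<notin> E"
    using assms(1) by (auto simp: simple_digraph_def)
  have finE: "finite E" using finV EV by (meson finite_SigmaI finite_subset)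
  have finW: "finite W" using assms(4) finV by (meson finite_subset psubset_imp_subset)
  define f where "f = det_on W (Lmat E)"
  define Y0 where "Y0 = zD id {} ` W"
  have finY0: "finite Y0" using finW by (simp add: Y0_def)
  have f_m0: "lk f (mon Y0) = 1" using coeff_m0[OF finE loop finW] by (simp add: f_def Y0_def)
  have hf: "hom (card W) f" using det_hom[OF finW] by (simp add: f_def)
  have maf: "\<And>m x. m \<in> ks f \<Longrightarrow> lk m x \<le> 1" using det_ma[OF finW] by (auto simp: ma_def f_def)
  have cardpos: "card W > 0" using finW assms(3) by (simp add: card_gt_0_iff)
  have f0: "f \<noteq> 0" using f_m0 by auto
  have nunit: "\<not> f dvd 1"
  proof
    assume "f dvd 1"
    then obtain u where u: "1 = f * u" by (auto elim: dvdE)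
    have "lk (f * u) (0 + 0) = lk f 0 * lk u 0"
      by (rule lookup_mult_unique) (metis add_0 pm_add_eq_0)
    moreover have "0 \<notin> ks f" using hf cardpos tdeg_zero_iff[of "0 :: 'v indet \<Rightarrow>\<^sub>0 nat"] by (auto simp: hom_def)
    ultimately have "lk (f * u) 0 = 0" by (simp add: in_keys_iff)
    then show False using u by (metis lookup_one_zero one_neq_zero)
  qed
  have fact: "g dvd 1 \<or> h dvd 1" if fgh: "f = g * h" for g h
  proof (rule ccontr)
    assume nu: "\<not> (g dvd 1 \<or> h dvd 1)"
    have g0: "g \<noteq> 0" and h0: "h \<noteq> 0" using f0 fgh by auto
    have disj: "vars g \<inter> vars h = {}" using vars_disjoint[OF g0 h0] maf fgh by auto
    have coef: "lk f (a + b) = lk g a * lk h b" if "a \<in> ks g" "b \<in> ks h" for a b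
      unfolding fgh using that disj by (intro lookup_mult_disjoint[of g "vars g" h "vars h"]) (auto simp: vars_def)
    have inf: "a + b \<in> ks f" if "a \<in> ks g" "b \<in> ks h" for a b
      using coef[OF that] that by (simp add: in_keys_iff)
    have dec: "\<exists>a\<in>ks g. \<exists>b\<in>ks h. m = a + b" if "m \<in> ks f" for m
      using keys_mult[of g h] that fgh by blast
    obtain a1 where a1: "a1 \<in> ks g" using g0 by (metis all_not_in_conv keys_eq_empty)
    obtain b1 where b1: "b1 \<in> ks h" using h0 by (metis all_not_in_conv keys_eq_empty)
    define dg where "dg = tdeg a1"
    define dh where "dh = tdeg b1"
    have tW: "tdeg m = card W" if "m \<in> ks f" for m using hf that by (simp add: hom_def)
    have degW: "dg + dh = card W" using tW[OF inf[OF a1 b1]] by (simp add: tdeg_add dg_def dh_def)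
    have homg: "tdeg a = dg" if "a \<in> ks g" for a
      using tW[OF inf[OF that b1]] degW by (simp add: tdeg_add dh_def)
    have homh: "tdeg b = dh" if "b \<in> ks h" for b
      using tW[OF inf[OF a1 that]] degW by (simp add: tdeg_add dg_def)
    have dgpos: "dg > 0"
    proof (rule ccontr)
      assume "\<not> dg > 0"
      then have "ks g \<subseteq> {0}" using homg by (auto simp: tdeg_zero_iff)
      then show False using const_unit[OF g0] nu by auto
    qed
    have dhpos: "dh > 0"
    proof (rule ccontr)
      assume "\<not> dh > 0"
      then have "ks h \<subseteq> {0}" using homh by (auto simp: tdeg_zero_iff)
      then show False using const_unit[OF h0] nu by auto
    qed
    have restr: "mon (Z - vars h) \<in> ks g \<and> mon (Z \<inter> vars h) \<in> ks h \<and>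
                 card (Z \<inter> vars h) = dh \<and> card (Z - vars h) = dg"
      if Z: "finite Z" "mon Z \<in> ks f" for Z
    proof -
      obtain a b where ab: "a \<in> ks g" "b \<in> ks h" "mon Z = a + b" using dec[OF Z(2)] by blast
      have ka: "ks a \<subseteq> vars g" and kb: "ks b \<subseteq> vars h" using ab by (auto simp: vars_def)
      have pt: "lk a x = lk (mon (Z - vars h)) x \<and> lk b x = lk (mon (Z \<inter> vars h)) x" for x
      proof -
        have e: "lk (mon Z) x = lk a x + lk b x" using ab(3) by (simp add: lookup_add)
        show ?thesis
        proof (cases "x \<in> vars h")
          case True
          then have "x \<notin> ks a" using ka disj by auto
          then show ?thesis using e True Z(1) by (simp add: lookup_mon in_keys_iff)
        next
          case False
          then have "x \<notin> ks b" using kb by auto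
          then show ?thesis using e False Z(1) by (simp add: lookup_mon in_keys_iff)
        qed
      qed
      have "a = mon (Z - vars h)" "b = mon (Z \<inter> vars h)" using pt by (auto intro!: poly_mapping_eqI)
      then have m1: "mon (Z - vars h) \<in> ks g" and m2: "mon (Z \<inter> vars h) \<in> ks h" using ab by auto
      have "card (Z \<inter> vars h) = dh" using homh[OF m2] Z(1) by (simp add: tdeg_mon)
      moreover have "card (Z - vars h) = dg" using homg[OF m1] Z(1) by (simp add: tdeg_mon)
      ultimately show ?thesis using m1 m2 by simp
    qed
    define B where "B = {v\<in>W. Inr v \<in> vars h}"
    define A where "A = W - B"
    have Y0eq: "Y0 = Inr ` W" by (auto simp: Y0_def zD_def)
    have m0k: "mon Y0 \<in> ks f" using f_m0 by (simp add: in_keys_iff)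
    have YB: "Y0 \<inter> vars h = Inr ` B" by (auto simp: Y0eq B_def)
    have YA: "Y0 - vars h = Inr ` A" by (auto simp: Y0eq B_def A_def)
    have cB: "card B = dh" using restr[OF finY0 m0k] YB by (simp add: card_image)
    have cA: "card A = dg" using restr[OF finY0 m0k] YA by (simp add: card_image)
    have finA: "finite A" and finB: "finite B" using finW by (auto simp: A_def B_def)
    have Ane: "A \<noteq> {}" using cA dgpos by auto
    have Bne: "B \<noteq> {}" using cB dhpos by auto
    have AB: "A \<inter> B = {}" "A \<union> B = W" by (auto simp: A_def B_def)
    obtain a0 b0 where a0: "a0 \<in> A" and b0: "b0 \<in> B" using Ane Bne by blast
    have "(a0, b0) \<in> (E \<inter> W \<times> W)\<^sup>*" using assms(5) a0 b0 AB unfolding strongly_connected_def by blast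
    then obtain u v where uv: "(u, v) \<in> E \<inter> W \<times> W" "u \<in> A" "v \<notin> A"
      using cross_edge[of a0 b0 _ A] a0 b0 AB by blast
    have vB: "v \<in> B" using uv AB by auto
    have "(v, u) \<in> (E \<inter> W \<times> W)\<^sup>*" using assms(5) uv unfolding strongly_connected_def by blast
    then obtain cs where cs: "distinct cs" "length cs \<ge> 2" "set cs \<subseteq> W"
        "\<forall>c\<in>set cs. (c, cycle_of_list cs c) \<in> E" "u \<in> set cs" "v \<in> set cs"
      using cycle_exists[of u v E W] uv vB AB by auto
    let ?n = "cycle_of_list cs"
    define C where "C = set cs"
    have csE: "\<And>c. c \<in> set cs \<Longrightarrow> (c, ?n c) \<in> E" using cs(4) by blast
    define ZA where "ZA = zD ?n (C \<inter> A) ` W"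
    define ZB where "ZB = zD ?n (C \<inter> B) ` W"
    define ZC where "ZC = zD ?n C ` W"
    have finZ: "finite ZA" "finite ZB" "finite ZC" using finW by (auto simp: ZA_def ZB_def ZC_def)
    have kA: "mon ZA \<in> ks f"
    proof -
      have "C \<inter> A \<noteq> set cs" using cs(6) vB AB by (auto simp: C_def)
      then have "lk f (mon ZA) \<noteq> 0" unfolding f_def ZA_def
        using cycle_coeff_part[OF finE loop finW cs(1,2,3) csE, of "C \<inter> A"] by (auto simp: C_def)
      then show ?thesis by (simp add: in_keys_iff)
    qed
    have kB: "mon ZB \<in> ks f"
    proof -
      have "C \<inter> B \<noteq> set cs" using cs(5) uv(2) AB by (auto simp: C_def)
      then have "lk f (mon ZB) \<noteq> 0" unfolding f_def ZB_def
        using cycle_coeff_part[OF finE loop finW cs(1,2,3) csE, of "C \<inter> B"] by (auto simp: C_def)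
      then show ?thesis by (simp add: in_keys_iff)
    qed
    have ZAh: "ZA \<inter> vars h = Inr ` B"
    proof -
      have sub: "Inr ` B \<subseteq> ZA \<inter> vars h"
      proof
        fix x :: "'v indet" assume "x \<in> Inr ` B"
        then obtain w where w: "w \<in> B" "x = Inr w" by auto
        have "w \<notin> C \<inter> A" using w AB by auto
        then have "zD ?n (C \<inter> A) w = Inr w" by (simp add: zD_def)
        moreover have "w \<in> W" using w by (simp add: B_def)
        ultimately have "x \<in> ZA" using w by (auto simp: ZA_def image_iff intro: bexI[of _ w])
        moreover have "x \<in> vars h" using w by (simp add: B_def)
        ultimately show "x \<in> ZA \<inter> vars h" by simp
      qed
      have "card (ZA \<inter> vars h) = card (Inr ` B)" using restr[OF finZ(1) kA] cB by (simp add: card_image)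
      then show ?thesis using sub finZ(1) by (metis card_subset_eq finite_Int)
    qed
    have ZBh: "ZB - vars h = Inr ` A"
    proof -
      have sub: "Inr ` A \<subseteq> ZB - vars h"
      proof
        fix x :: "'v indet" assume "x \<in> Inr ` A"
        then obtain w where w: "w \<in> A" "x = Inr w" by auto
        have "w \<notin> C \<inter> B" using w AB by auto
        then have "zD ?n (C \<inter> B) w = Inr w" by (simp add: zD_def)
        moreover have "w \<in> W" using w by (simp add: A_def)
        ultimately have "x \<in> ZB" using w by (auto simp: ZB_def image_iff intro: bexI[of _ w])
        moreover have "x \<notin> vars h" using w by (simp add: A_def B_def)
        ultimately show "x \<in> ZB - vars h" by simp
      qed
      have "card (ZB - vars h) = card (Inr ` A)" using restr[OF finZ(2) kB] cA by (simp add: card_image)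
      then show ?thesis using sub finZ(2) by (metis card_subset_eq finite_Diff)
    qed
    have e1: "ZA - vars h = ZA - Inr ` B" using ZAh by blast
    have e2: "ZB \<inter> vars h = ZB - Inr ` A" using ZBh by blast
    have CW: "C \<subseteq> W" using cs(3) by (simp add: C_def)
    have un': "(ZA - Inr ` B) \<union> (ZB - Inr ` A) = ZC" and dj': "(ZA - Inr ` B) \<inter> (ZB - Inr ` A) = {}"
      unfolding ZA_def ZB_def ZC_def using zD_split[OF AB CW, of ?n] by auto
    have un: "(ZA - vars h) \<union> (ZB \<inter> vars h) = ZC" and dj: "(ZA - vars h) \<inter> (ZB \<inter> vars h) = {}"
      using un' dj' e1 e2 by simp_all
    have "mon ZC = mon (ZA - vars h) + mon (ZB \<inter> vars h)"
      using mon_union[of "ZA - vars h" "ZB \<inter> vars h"] un dj finZ by auto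
    then have "lk f (mon ZC) = lk g (mon (ZA - vars h)) * lk h (mon (ZB \<inter> vars h))"
      using coef restr[OF finZ(1) kA] restr[OF finZ(2) kB] by simp
    then have "lk f (mon ZC) \<noteq> 0"
      using restr[OF finZ(1) kA] restr[OF finZ(2) kB] by (simp add: in_keys_iff)
    moreover have "lk f (mon ZC) = 0" unfolding f_def ZC_def C_def
      by (rule cycle_coeff_zero[OF finE loop finW cs(1,2,3) csE])
    ultimately show False by simp
  qed
  show ?thesis unfolding irreducible_def using f0 nunit fact by (auto simp: f_def)
qed


end
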